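(* If a sign pattern matrix $A$ allows algebraic positivity, then every super-pattern of $A$ allows algebraic positivity.
   Context: A sign pattern matrix is a matrix with entries in $\{+,-,0\}$; its qualitative class $Q(A)$ is the set of real matrices obtained by replacing each $+$ by some positive number, each $-$ by some negative number and each $0$ by $0$. A real square matrix $M$ is algebraically positive if there is a real polynomial $f$ such that every entry of $f(M)$ is positive; $A$ allows algebraic positivity if some matrix in $Q(A)$ is algebraically positive. A sign pattern $X$ is a subpattern of $A$ if $X$ is obtained from $A$ by replacing some (possibly none) of its nonzero entries with $0$; then $A$ is a super-pattern of $X$. *)

theory Defs
  imports "HOL-Analysis.Analysis" "HOL-Computational_Algebra.Polynomial"
begin

datatype sign = Pos | Neg | Zero

type_synonym 'n sign_pattern = "'n \<Rightarrow> 'n \<Rightarrow> sign"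

definition sign_of :: "real \<Rightarrow> sign" where
  "sign_of x = (if x > 0 then Pos else if x < 0 then Neg else Zero)"

definition qual_class :: "'n::finite sign_pattern \<Rightarrow> (real^'n^'n) set" where
  "qual_class A = {M. \<forall>i j. sign_of (M $ i $ j) = A i j}"

definition matrix_pow :: "real^'n^'n \<Rightarrow> nat \<Rightarrow> real^'n^'n" where
  "matrix_pow M k = ((\<lambda>X. X ** M) ^^ k) (mat 1)"

definition poly_mat :: "real poly \<Rightarrow> real^'n^'n \<Rightarrow> real^'n^'n" where
  "poly_mat f M = (\<Sum>k\<le>degree f. coeff f k *\<^sub>R matrix_pow M k)"

definition algebraically_positive :: "real^'n^'n \<Rightarrow> bool" where
  "algebraically_positive M \<longleftrightarrow> (\<exists>f. \<forall>i j. poly_mat f M $ i $ j > 0)"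

definition allows_alg_pos :: "'n::finite sign_pattern \<Rightarrow> bool" where
  "allows_alg_pos A \<longleftrightarrow> (\<exists>M \<in> qual_class A. algebraically_positive M)"

definition subpattern :: "'n sign_pattern \<Rightarrow> 'n sign_pattern \<Rightarrow> bool" where
  "subpattern X A \<longleftrightarrow> (\<forall>i j. X i j = A i j \<or> X i j = Zero)"

end

theory Submission
  imports Defs
begin

lemma mp_Suc: "matrix_pow M (Suc k) = matrix_pow M k ** M"
  by (simp add: matrix_pow_def)

lemma mp_tendsto:
  fixes M E :: "real^'n::finite^'n"
  shows "((\<lambda>t. matrix_pow (M + t *\<^sub>R E) k $ i $ j) \<longlongrightarrow> matrix_pow M k $ i $ j) (at (0::real))"
proof (induction k arbitrary: i j)
  case 0
  then show ?case by (simp add: matrix_pow_def)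
next
  case (Suc k)
  have e: "((\<lambda>t. (M + t *\<^sub>R E) $ l $ j) \<longlongrightarrow> M $ l $ j) (at (0::real))" for l
  proof -
    have "((\<lambda>t. M $ l $ j + t * E $ l $ j) \<longlongrightarrow> M $ l $ j + 0 * E $ l $ j) (at (0::real))"
      by (intro tendsto_intros)
    then show ?thesis by simp
  qed
  show ?case
    unfolding mp_Suc matrix_matrix_mult_def
    by (simp only: vec_lambda_beta, intro tendsto_sum tendsto_mult Suc e)
qed

lemma pm_tendsto:
  fixes M E :: "real^'n::finite^'n"
  shows "((\<lambda>t. poly_mat f (M + t *\<^sub>R E) $ i $ j) \<longlongrightarrow> poly_mat f M $ i $ j) (at (0::real))"
  unfolding poly_mat_def sum_component
  by (intro tendsto_sum, unfold vector_scaleR_component, intro tendsto_scaleR tendsto_const mp_tendsto)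

theorem theorem3p7:
  fixes A B :: "'n::finite sign_pattern"
  assumes "allows_alg_pos A"
    and "subpattern A B"
  shows "allows_alg_pos B"
proof -
  obtain M f where MQ: "M \<in> qual_class A" and fpos: "\<And>i j. poly_mat f M $ i $ j > 0"
    using assms(1) unfolding allows_alg_pos_def algebraically_positive_def by blast
  define E :: "real^'n^'n" where "E = (\<chi> i j. if A i j = Zero then
      (case B i j of Pos \<Rightarrow> 1 | Neg \<Rightarrow> -1 | Zero \<Rightarrow> 0) else 0)"
  have ev1: "eventually (\<lambda>t. poly_mat f (M + t *\<^sub>R E) $ i $ j > 0) (at_right (0::real))" for i j
    using order_tendstoD(1)[OF tendsto_mono[OF at_le[OF subset_UNIV] pm_tendsto] fpos] .
  have "eventually (\<lambda>t. \<forall>i j. poly_mat f (M + t *\<^sub>R E) $ i $ j > 0) (at_right (0::real))"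
    using ev1 by (simp add: eventually_all_finite)
  moreover have "eventually (\<lambda>t. t > 0) (at_right (0::real))"
    by (simp add: eventually_at_right_less)
  ultimately have "eventually (\<lambda>t. t > 0 \<and> (\<forall>i j. poly_mat f (M + t *\<^sub>R E) $ i $ j > 0)) (at_right (0::real))"
    by (rule eventually_conj[rotated])
  then obtain t where t: "t > 0" "\<And>i j. poly_mat f (M + t *\<^sub>R E) $ i $ j > 0"
    using eventually_happens'[OF trivial_limit_at_right_real] by blast
  have "M + t *\<^sub>R E \<in> qual_class B"
    unfolding qual_class_def
  proof (intro CollectI allI)
    fix i j
    have s: "sign_of (M $ i $ j) = A i j" using MQ by (simp add: qual_class_def)
    show "sign_of ((M + t *\<^sub>R E) $ i $ j) = B i j"
    proof (cases "A i j = Zero")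
      case True
      then have "M $ i $ j = 0" using s by (auto simp: sign_of_def split: if_splits)
      then show ?thesis using True t(1)
        by (cases "B i j") (auto simp: E_def sign_of_def)
    next
      case False
      then have "B i j = A i j" using assms(2) unfolding subpattern_def by metis
      then show ?thesis using False s by (simp add: E_def)
    qed
  qed
  then show ?thesis unfolding allows_alg_pos_def algebraically_positive_def using t(2) by blast
qed

end
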